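(* Let $J$ be a real symmetric $n\times n$ matrix with pairwise distinct eigenvalues, and consider the Euler–Arnold equations $$\dot M = [M,\Omega],\qquad M = \Omega J + J\Omega,$$ with $M,\Omega\in\mathfrak{so}(n)$, $\Omega$ being the unique skew-symmetric matrix with $\Omega J+J\Omega=M$. Then the equilibrium points (relative equilibria) of this system are exactly those $M$ whose $\Omega$ is obtained from the following data: (1) an orthogonal decomposition $\mathbb{R}^n = \left(\bigoplus_{i=1}^{k}\Pi_i\right)\oplus \Pi_0$ in which every $\Pi_i$ ($i=0,\dots,k$) is spanned by principal axes of inertia (eigenvectors of $J$), and every $\Pi_i$ with $i>0$ is nonzero and even-dimensional; (2) for each $i>0$, an angular velocity $\omega_i>0$ and a complex structure $I_i$ on $\Pi_i$ compatible with the Euclidean metric; namely, $\Omega$ acts as $\omega_i I_i$ on $\Pi_i$ for each $i>0$ and as $0$ on $\Pi_0$.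
   Context: $\mathfrak{so}(n)$ denotes the real skew-symmetric $n\times n$ matrices; $[X,Y]=XY-YX$. An equilibrium point means $M$ with $[M,\Omega]=0$. The principal axes of inertia are the eigenvector lines of $J$. A complex structure on a Euclidean space $\Pi$ compatible with the Euclidean metric is an orthogonal linear operator $I\colon\Pi\to\Pi$ with $I^2=-\mathrm{Id}$ (equivalently, a matrix in $\mathfrak{so}(2m)\cap\mathrm{SO}(2m)$ up to orientation conventions, i.e. skew-symmetric and orthogonal). *)

theory Defs
  imports "HOL-Analysis.Analysis"
begin

definition skew_mat :: "real^'n^'n \<Rightarrow> bool" where
  "skew_mat A \<longleftrightarrow> transpose A = - A"

definition sym_mat :: "real^'n^'n \<Rightarrow> bool" where
  "sym_mat A \<longleftrightarrow> transpose A = A"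

definition commutator :: "real^'n^'n \<Rightarrow> real^'n^'n \<Rightarrow> real^'n^'n" where
  "commutator X Y = X ** Y - Y ** X"

definition mat_eigenvalues :: "real^'n^'n \<Rightarrow> real set" where
  "mat_eigenvalues A = {l. \<exists>v. v \<noteq> 0 \<and> A *v v = l *\<^sub>R v}"

definition distinct_eigenvalues :: "real^'n^'n \<Rightarrow> bool" where
  "distinct_eigenvalues A \<longleftrightarrow> card (mat_eigenvalues A) = CARD('n)"

definition principal_axis :: "real^'n^'n \<Rightarrow> real^'n \<Rightarrow> bool" where
  "principal_axis J v \<longleftrightarrow> v \<noteq> 0 \<and> (\<exists>l. J *v v = l *\<^sub>R v)"

definition spanned_by_principal_axes :: "real^'n^'n \<Rightarrow> (real^'n) set \<Rightarrow> bool" where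
  "spanned_by_principal_axes J P \<longleftrightarrow> (\<exists>S. (\<forall>v\<in>S. principal_axis J v) \<and> P = span S)"

definition orth_decomposition :: "nat \<Rightarrow> (nat \<Rightarrow> (real^'n) set) \<Rightarrow> bool" where
  "orth_decomposition k P \<longleftrightarrow>
     (\<forall>i\<le>k. subspace (P i)) \<and>
     (\<forall>i\<le>k. \<forall>j\<le>k. i \<noteq> j \<longrightarrow> (\<forall>x\<in>P i. \<forall>y\<in>P j. inner x y = 0)) \<and>
     span (\<Union>i\<le>k. P i) = UNIV"

definition compatible_complex_structure :: "(real^'n) set \<Rightarrow> (real^'n \<Rightarrow> real^'n) \<Rightarrow> bool" where
  "compatible_complex_structure P I \<longleftrightarrow>
     linear I \<and> (\<forall>x\<in>P. I x \<in> P) \<and>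
     (\<forall>x\<in>P. \<forall>y\<in>P. inner (I x) (I y) = inner x y) \<and>
     (\<forall>x\<in>P. I (I x) = - x)"

end

theory Submission
  imports Defs
begin

lemma inner_mat_transpose:
  fixes A :: "real^'n^'n"
  shows "inner (A *v x) y = inner x (transpose A *v y)"
  by (metis transpose_matrix_vector dot_lmul_matrix inner_commute)

lemma kernel_subspace:
  fixes A :: "real^'n^'n"
  shows "subspace {x. A *v x = c *\<^sub>R x}"
  unfolding subspace_def
  by (simp add: matrix_vector_right_distrib matrix_vector_mult_scaleR scaleR_add_right)

lemma eigen_span:
  fixes A :: "real^'n^'n"
  assumes "\<forall>b\<in>T. A *v b = c *\<^sub>R b" "x \<in> span T"
  shows "A *v x = c *\<^sub>R x"
proof -
  have "span T \<subseteq> {x. A *v x = c *\<^sub>R x}"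
    using assms(1) by (intro span_minimal kernel_subspace) auto
  thus ?thesis using assms(2) by auto
qed

lemma preserve_span:
  fixes A :: "real^'n^'n"
  assumes "\<forall>b\<in>T. \<exists>l. A *v b = l *\<^sub>R b" "x \<in> span T"
  shows "A *v x \<in> span T"
proof -
  have lin: "linear ((*v) A)" by (rule matrix_vector_mul_linear)
  have "(*v) A ` T \<subseteq> span T"
  proof
    fix y assume "y \<in> (*v) A ` T"
    then obtain b where b: "b \<in> T" "y = A *v b" by auto
    then obtain l where "A *v b = l *\<^sub>R b" using assms(1) by blast
    thus "y \<in> span T" using b by (simp add: span_base span_scale)
  qed
  hence "span ((*v) A ` T) \<subseteq> span T" by (intro span_minimal) auto
  thus ?thesis using span_linear_image[OF lin, of T] assms(2) by auto
qed

lemma orth_in_span: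
  fixes B C :: "(real^'n) set"
  assumes fin: "finite B" and po: "pairwise orthogonal B" and sp: "span B = UNIV"
    and CB: "C \<subseteq> B" and orth: "\<And>b. b \<in> B - C \<Longrightarrow> inner x b = 0"
  shows "x \<in> span C"
proof -
  let ?s = "\<Sum>b\<in>B. (b \<bullet> x / (b \<bullet> b)) *\<^sub>R b"
  have "orthogonal (x - ?s) (x - ?s)" using Gram_Schmidt_step[OF po, of "x - ?s" x] sp by auto
  hence "x - ?s = 0" by (simp only: orthogonal_self)
  hence x: "x = ?s" by simp
  have "?s = (\<Sum>b\<in>C. (b \<bullet> x / (b \<bullet> b)) *\<^sub>R b)"
    using orth by (intro sum.mono_neutral_right[OF fin CB]) (auto simp: inner_commute)
  also have "\<dots> \<in> span C" by (intro span_sum span_scale span_base) auto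
  finally show ?thesis using x by simp
qed

lemma even_dim_cs:
  fixes P :: "(real^'n) set"
  assumes "subspace P" "compatible_complex_structure P I"
  shows "even (dim P)"
  using assms
proof (induction "dim P" arbitrary: P rule: less_induct)
  case less
  have lin: "linear I" and inv: "\<And>x. x\<in>P \<Longrightarrow> I x \<in> P"
   and iso: "\<And>x y. x\<in>P \<Longrightarrow> y\<in>P \<Longrightarrow> inner (I x) (I y) = inner x y"
   and sq: "\<And>x. x\<in>P \<Longrightarrow> I (I x) = - x"
    using less.prems unfolding compatible_complex_structure_def by auto
  have skew: "inner (I x) y = - inner x (I y)" if "x\<in>P" "y\<in>P" for x y
  proof -
    have "inner (I x) y = inner (I (I x)) (I y)" using iso inv that by simp
    also have "\<dots> = - inner x (I y)" using sq that by simp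
    finally show ?thesis .
  qed
  show ?case
  proof (cases "P = {0}")
    case True then show ?thesis by simp
  next
    case False
    then obtain v where v: "v \<in> P" "v \<noteq> 0" using less.prems(1) subspace_0 by blast
    define A where "A = span {v, I v}"
    define Q where "Q = {y\<in>P. \<forall>x\<in>A. orthogonal x y}"
    have sA: "subspace A" unfolding A_def by simp
    have AP: "A \<subseteq> P" unfolding A_def using v inv less.prems(1) by (intro span_minimal) auto
    have dQ: "dim Q + dim A = dim P" unfolding Q_def
      by (rule dim_subspace_orthogonal_to_vectors[OF sA less.prems(1) AP])
    have o1: "inner v (I v) = 0" using skew[OF v(1) v(1)] by (simp add: inner_commute)
    have Iv0: "I v \<noteq> 0" using iso[OF v(1) v(1)] v(2) by auto
    have vIv: "v \<noteq> I v" using o1 v(2) by auto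
    have po: "pairwise orthogonal {v, I v}" using o1
      by (auto simp: pairwise_def orthogonal_def inner_commute)
    have ind: "independent {v, I v}"
      by (rule pairwise_orthogonal_independent[OF po]) (use v Iv0 in auto)
    have dA: "dim A = 2" unfolding A_def
      using indep_card_eq_dim_span[OF ind] vIv by simp
    have sQ: "subspace Q"
    proof -
      have "Q = P \<inter> {y. \<forall>x\<in>A. orthogonal x y}" unfolding Q_def by auto
      moreover have "subspace (P \<inter> {y. \<forall>x\<in>A. orthogonal x y})"
        by (intro subspace_inter less.prems(1) subspace_orthogonal_to_vectors)
      ultimately show ?thesis by simp
    qed
    have QP: "Q \<subseteq> P" unfolding Q_def by auto
    have cQ: "compatible_complex_structure Q I"
      unfolding compatible_complex_structure_def
    proof (intro conjI ballI lin)
      fix y assume y: "y \<in> Q"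
      hence yP: "y \<in> P" and yA: "\<forall>x\<in>A. orthogonal x y" unfolding Q_def by auto
      have "orthogonal v y" "orthogonal (I v) y" using yA unfolding A_def by (auto intro: span_base)
      hence "orthogonal (I y) v" "orthogonal (I y) (I v)"
        using skew[OF yP v(1)] iso[OF yP v(1)]
        by (auto simp: orthogonal_def inner_commute)
      hence "\<forall>x\<in>A. orthogonal (I y) x" unfolding A_def
        by (auto intro: orthogonal_to_span)
      thus "I y \<in> Q" unfolding Q_def using inv[OF yP] by (auto simp: orthogonal_commute)
    next
      fix x y assume "x \<in> Q" "y \<in> Q" thus "inner (I x) (I y) = inner x y" using iso QP by auto
    next
      fix x assume "x \<in> Q" thus "I (I x) = - x" using sq QP by auto
    qed
    have "even (dim Q)" using less.hyps[of Q] dQ dA sQ cQ by auto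
    moreover have "dim P = dim Q + 2" using dQ dA by simp
    ultimately show ?thesis by simp
  qed
qed

lemma my_matrix_add_rdistrib:
  fixes A B C :: "real^'n^'n"
  shows "(A + B) ** C = A ** C + B ** C"
  by (vector matrix_matrix_mult_def sum.distrib[symmetric] field_simps)

lemma comm_eq:
  fixes J \<Omega> :: "real^'n^'n"
  shows "commutator (\<Omega> ** J + J ** \<Omega>) \<Omega> = J ** (\<Omega> ** \<Omega>) - (\<Omega> ** \<Omega>) ** J"
  unfolding commutator_def
  by (simp add: my_matrix_add_rdistrib matrix_add_ldistrib matrix_mul_assoc)

lemma neg_mat_vec:
  fixes A :: "real^'n^'n"
  shows "(- A) *v y = - (A *v y)"
  by (simp add: matrix_vector_mult_def vec_eq_iff sum_negf)

theorem corollary1: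
  fixes J M \<Omega> :: "real^'n^'n"
  assumes "sym_mat J"
    and "distinct_eigenvalues J"
    and "skew_mat \<Omega>"
    and "M = \<Omega> ** J + J ** \<Omega>"
  shows "commutator M \<Omega> = 0 \<longleftrightarrow>
    (\<exists>(k::nat) (P :: nat \<Rightarrow> (real^'n) set) (\<omega> :: nat \<Rightarrow> real) (I :: nat \<Rightarrow> real^'n \<Rightarrow> real^'n).
        orth_decomposition k P \<and>
        (\<forall>i\<le>k. spanned_by_principal_axes J (P i)) \<and>
        (\<forall>i\<in>{1..k}. P i \<noteq> {0} \<and> even (dim (P i))) \<and>
        (\<forall>i\<in>{1..k}. \<omega> i > 0 \<and> compatible_complex_structure (P i) (I i)) \<and>
        (\<forall>i\<in>{1..k}. \<forall>x\<in>P i. \<Omega> *v x = \<omega> i *\<^sub>R I i x) \<and>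
        (\<forall>x\<in>P 0. \<Omega> *v x = 0))"
proof -
  define S where "S = \<Omega> ** \<Omega>"
  have comm: "commutator M \<Omega> = J ** S - S ** J" using assms(4) comm_eq S_def by simp
  have Jsym: "\<And>x y. inner (J *v x) y = inner x (J *v y)"
    using assms(1) unfolding sym_mat_def by (simp add: inner_mat_transpose)
  have Oskew: "\<And>x y. inner (\<Omega> *v x) y = - inner x (\<Omega> *v y)"
    using assms(3) unfolding skew_mat_def by (simp add: inner_mat_transpose neg_mat_vec)
  have Ssym: "\<And>x y. inner (S *v x) y = inner x (S *v y)"
  proof -
    fix x y
    have "inner (S *v x) y = inner (\<Omega> *v (\<Omega> *v x)) y" by (simp add: S_def matrix_vector_mul_assoc)
    also have "\<dots> = inner x (\<Omega> *v (\<Omega> *v y))" using Oskew by simp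
    also have "\<dots> = inner x (S *v y)" by (simp add: S_def matrix_vector_mul_assoc)
    finally show "inner (S *v x) y = inner x (S *v y)" .
  qed
  have Sneg: "\<And>x. inner (S *v x) x = - inner (\<Omega> *v x) (\<Omega> *v x)"
  proof -
    fix x
    have "inner (S *v x) x = inner (\<Omega> *v (\<Omega> *v x)) x" by (simp add: S_def matrix_vector_mul_assoc)
    also have "\<dots> = - inner (\<Omega> *v x) (\<Omega> *v x)" using Oskew by simp
    finally show "inner (S *v x) x = - inner (\<Omega> *v x) (\<Omega> *v x)" .
  qed
  have SO: "S ** \<Omega> = \<Omega> ** S" by (simp add: S_def matrix_mul_assoc)
  show ?thesis
  proof
    assume "commutator M \<Omega> = 0"
    hence JS: "J ** S = S ** J" using comm by simp
    define E where "E = mat_eigenvalues J"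
    have cardE: "card E = CARD('n)" using assms(2) unfolding E_def distinct_eigenvalues_def .
    hence finE: "finite E" using card_ge_0_finite[of E] by simp
    have "\<forall>l\<in>E. \<exists>w. w \<noteq> 0 \<and> J *v w = l *\<^sub>R w" unfolding E_def mat_eigenvalues_def by auto
    then obtain v where v: "\<And>l. l \<in> E \<Longrightarrow> v l \<noteq> 0 \<and> J *v v l = l *\<^sub>R v l" by metis
    have eig_orth: "inner w u = 0" if "J *v w = l *\<^sub>R w" "J *v u = m *\<^sub>R u" "l \<noteq> m" for w u l m
    proof -
      have "l * inner w u = m * inner w u" using Jsym[of w u] that(1,2) by simp
      thus ?thesis using that(3) by simp
    qed
    define B where "B = v ` E"
    have injv: "inj_on v E"
    proof (rule inj_onI)
      fix l m assume lm: "l \<in> E" "m \<in> E" "v l = v m"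
      have "l *\<^sub>R v l = J *v v l" using v[OF lm(1)] by simp
      also have "\<dots> = J *v v m" using lm(3) by simp
      also have "\<dots> = m *\<^sub>R v l" using v[OF lm(2)] lm(3) by simp
      finally show "l = m" using v[OF lm(1)] by simp
    qed
    have cardB: "card B = CARD('n)" unfolding B_def using card_image[OF injv] cardE by simp
    have finB: "finite B" unfolding B_def using finE by simp
    have B0: "0 \<notin> B" unfolding B_def using v by auto
    have poB: "pairwise orthogonal B"
    proof (unfold pairwise_def, intro ballI impI)
      fix x y assume xy: "x \<in> B" "y \<in> B" "x \<noteq> y"
      then obtain l m where lm: "l \<in> E" "m \<in> E" "x = v l" "y = v m" unfolding B_def by auto
      with xy(3) have "l \<noteq> m" by auto
      thus "orthogonal x y" unfolding orthogonal_def using eig_orth v lm by blast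
    qed
    have indB: "independent B" by (rule pairwise_orthogonal_independent[OF poB B0])
    have spB: "span B = UNIV"
    proof -
      have "dim (UNIV :: (real^'n) set) = CARD('n)" by (simp add: dim_UNIV)
      hence "independent B = (UNIV \<subseteq> span B)" using card_eq_dim[of B UNIV] cardB finB by simp
      thus ?thesis using indB by auto
    qed
    have "\<exists>c. S *v v l = c *\<^sub>R v l" if l: "l \<in> E" for l
    proof -
      let ?w = "S *v v l"
      have Jw: "J *v ?w = l *\<^sub>R ?w"
      proof -
        have "J *v ?w = (J ** S) *v v l" by (simp add: matrix_vector_mul_assoc)
        also have "\<dots> = S *v (J *v v l)" using JS by (simp add: matrix_vector_mul_assoc)
        also have "\<dots> = l *\<^sub>R ?w" using v[OF l] by (simp add: matrix_vector_mult_scaleR)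
        finally show ?thesis .
      qed
      have "?w \<in> span {v l}"
      proof (rule orth_in_span[OF finB poB spB])
        show "{v l} \<subseteq> B" using l B_def by auto
        fix b assume "b \<in> B - {v l}"
        then obtain m where "m \<in> E" "b = v m" "m \<noteq> l" unfolding B_def by auto
        thus "inner ?w b = 0" using eig_orth[OF Jw, of b m] v by auto
      qed
      thus ?thesis by (auto simp: span_singleton)
    qed
    then obtain mu where mu: "\<And>l. l \<in> E \<Longrightarrow> S *v v l = mu l *\<^sub>R v l" by metis
    have mu_le: "mu l \<le> 0" if "l \<in> E" for l
    proof -
      have a: "mu l * inner (v l) (v l) = - inner (\<Omega> *v v l) (\<Omega> *v v l)"
        using Sneg[of "v l"] mu[OF that] by simp
      have b: "inner (v l) (v l) > 0" using v[OF that] by simp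
      have c: "inner (\<Omega> *v v l) (\<Omega> *v v l) \<ge> 0" by simp
      show ?thesis using a b c mult_pos_pos[of "mu l" "inner (v l) (v l)"] by linarith
    qed
    define V where "V = mu ` E - {0}"
    have finV: "finite V" using finE V_def by simp
    define k where "k = card V"
    obtain g where g: "bij_betw g {1..k} V" using ex_bij_betw_nat_finite_1[OF finV] k_def by auto
    define val where "val i = (if i = 0 then 0 else g i)" for i
    define G where "G i = {l\<in>E. mu l = val i}" for i
    define P where "P i = span (v ` G i)" for i
    define \<omega> where "\<omega> i = sqrt (- val i)" for i
    define I where "I i = (\<lambda>x. ((1 / \<omega> i) *\<^sub>R \<Omega>) *v x)" for i
    have gV: "g i \<in> V" if "i \<in> {1..k}" for i using g that by (auto simp: bij_betw_def)
    have val_neg: "val i < 0" if "i \<in> {1..k}" for i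
    proof -
      from gV[OF that] obtain l where "l \<in> E" "g i = mu l" "mu l \<noteq> 0" unfolding V_def by auto
      thus ?thesis using mu_le that val_def by force
    qed
    have val_inj: "val i \<noteq> val j" if ij: "i \<le> k" "j \<le> k" "i \<noteq> j" for i j
    proof -
      consider "i = 0" "j \<in> {1..k}" | "j = 0" "i \<in> {1..k}" | "i \<in> {1..k}" "j \<in> {1..k}"
        using ij by fastforce
      thus ?thesis
      proof cases
        case 1
        hence "val i = 0" "val j < 0" using val_neg[of j] val_def by auto
        thus ?thesis by simp
      next
        case 2
        hence "val j = 0" "val i < 0" using val_neg[of i] val_def by auto
        thus ?thesis by simp
      next
        case 3
        have "g i \<noteq> g j" using g 3 ij(3) unfolding bij_betw_def inj_on_def by blast
        thus ?thesis using 3 val_def by simp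
      qed
    qed
    have SP: "S *v x = val i *\<^sub>R x" if x: "x \<in> P i" for i x
    proof -
      have "\<forall>b\<in>v ` G i. S *v b = val i *\<^sub>R b" unfolding G_def using mu by auto
      thus ?thesis using eigen_span[of "v ` G i" S "val i" x] x unfolding P_def by blast
    qed
    have OP: "\<Omega> *v x \<in> P i" if x: "x \<in> P i" for i x
    proof -
      let ?y = "\<Omega> *v x"
      have Sy: "S *v ?y = val i *\<^sub>R ?y"
      proof -
        have "S *v ?y = \<Omega> *v (S *v x)" using SO by (simp add: matrix_vector_mul_assoc)
        thus ?thesis using SP[OF x] by (simp add: matrix_vector_mult_scaleR)
      qed
      show ?thesis unfolding P_def
      proof (rule orth_in_span[OF finB poB spB])
        show "v ` G i \<subseteq> B" unfolding B_def G_def by auto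
        fix b assume "b \<in> B - v ` G i"
        then obtain m where m: "m \<in> E" "b = v m" "mu m \<noteq> val i" unfolding B_def G_def by auto
        have "val i * inner ?y b = mu m * inner ?y b"
          using Ssym[of ?y b] Sy mu[OF m(1)] m(2) by simp
        thus "inner ?y b = 0" using m(3) by simp
      qed
    qed
    have Ix: "I i x = (1 / \<omega> i) *\<^sub>R (\<Omega> *v x)" for i x
      unfolding I_def by (metis matrix_scaleR_vector_ac matrix_vector_mult_scaleR)
    have cs: "compatible_complex_structure (P i) (I i)" if i: "i \<in> {1..k}" for i
    proof -
      have w: "\<omega> i > 0" using val_neg[OF i] \<omega>_def by simp
      have w2: "\<omega> i * \<omega> i = - val i" using val_neg[OF i] \<omega>_def by simp
      show ?thesis unfolding compatible_complex_structure_def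
      proof (intro conjI ballI)
        show "linear (I i)" unfolding I_def by (rule matrix_vector_mul_linear)
      next
        fix x assume x: "x \<in> P i"
        have "\<Omega> *v x \<in> P i" using OP x by blast
        thus "I i x \<in> P i" using span_scale[of "\<Omega> *v x" "v ` G i" "1 / \<omega> i"] by (simp add: Ix P_def)
      next
        fix x y assume x: "x \<in> P i" and y: "y \<in> P i"
        have "inner (\<Omega> *v x) (\<Omega> *v y) = - inner x (S *v y)"
          using Oskew[of x "\<Omega> *v y"] by (simp add: S_def matrix_vector_mul_assoc)
        also have "\<dots> = - val i * inner x y" using SP[OF y] by simp
        finally have e: "inner (\<Omega> *v x) (\<Omega> *v y) = (\<omega> i * \<omega> i) * inner x y" using w2 by simp
        show "inner (I i x) (I i y) = inner x y" using w by (simp add: Ix e field_simps)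
      next
        fix x assume x: "x \<in> P i"
        have "I i (I i x) = ((1/\<omega> i) * (1/\<omega> i)) *\<^sub>R (S *v x)"
          by (simp add: Ix S_def matrix_vector_mult_scaleR matrix_vector_mul_assoc)
        also have "\<dots> = ((1/\<omega> i) * (1/\<omega> i) * val i) *\<^sub>R x" using SP[OF x] by simp
        also have "(1/\<omega> i) * (1/\<omega> i) * val i = -1" using w2 w val_neg[OF i] by (simp add: field_simps)
        finally show "I i (I i x) = - x" by simp
      qed
    qed
    show "\<exists>k P \<omega> I. orth_decomposition k P \<and>
        (\<forall>i\<le>k. spanned_by_principal_axes J (P i)) \<and>
        (\<forall>i\<in>{1..k}. P i \<noteq> {0} \<and> even (dim (P i))) \<and>
        (\<forall>i\<in>{1..k}. \<omega> i > 0 \<and> compatible_complex_structure (P i) (I i)) \<and>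
        (\<forall>i\<in>{1..k}. \<forall>x\<in>P i. \<Omega> *v x = \<omega> i *\<^sub>R I i x) \<and>
        (\<forall>x\<in>P 0. \<Omega> *v x = 0)"
    proof (intro exI[of _ k] exI[of _ P] exI[of _ \<omega>] exI[of _ I] conjI)
      show "orth_decomposition k P"
        unfolding orth_decomposition_def
      proof (intro conjI allI impI ballI)
        fix i assume "i \<le> k" show "subspace (P i)" unfolding P_def by simp
      next
        fix i j x y assume ij: "i \<le> k" "j \<le> k" "i \<noteq> j" and xy: "x \<in> P i" "y \<in> P j"
        have gen: "orthogonal a b" if ab: "a \<in> v ` G i" "b \<in> v ` G j" for a b
        proof -
          obtain l m where lm: "l \<in> E" "m \<in> E" "a = v l" "b = v m" "mu l = val i" "mu m = val j"
            using ab unfolding G_def by auto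
          have "l \<noteq> m" using lm val_inj[OF ij] by auto
          thus ?thesis unfolding orthogonal_def using eig_orth v lm by blast
        qed
        have "orthogonal y a" if a: "a \<in> v ` G i" for a
        proof -
          have "\<forall>b\<in>v ` G j. orthogonal a b" using gen a by blast
          hence "orthogonal a y" using orthogonal_to_span[OF xy(2)[unfolded P_def]] by blast
          thus ?thesis by (simp add: orthogonal_commute)
        qed
        hence "orthogonal y x" using orthogonal_to_span[OF xy(1)[unfolded P_def]] by blast
        thus "inner x y = 0" by (simp add: orthogonal_def inner_commute)
      next
        have "B \<subseteq> (\<Union>i\<le>k. P i)"
        proof
          fix b assume "b \<in> B"
          then obtain l where l: "l \<in> E" "b = v l" unfolding B_def by auto
          have "\<exists>i\<le>k. mu l = val i"
          proof (cases "mu l = 0")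
            case True thus ?thesis using val_def by auto
          next
            case False
            hence "mu l \<in> V" using l V_def by auto
            then obtain i where i: "i \<in> {1..k}" "g i = mu l" using g
              by (metis bij_betw_imp_surj_on imageE)
            hence "i \<le> k" "mu l = val i" using val_def by auto
            thus ?thesis by blast
          qed
          then obtain i where "i \<le> k" "mu l = val i" by auto
          hence "b \<in> P i" unfolding P_def G_def using l by (auto intro: span_base)
          thus "b \<in> (\<Union>i\<le>k. P i)" using \<open>i\<le>k\<close> by auto
        qed
        hence "span B \<subseteq> span (\<Union>i\<le>k. P i)" by (rule span_mono)
        thus "span (\<Union>i\<le>k. P i) = UNIV" using spB by auto
      qed
    next
      show "\<forall>i\<le>k. spanned_by_principal_axes J (P i)"
      proof (intro allI impI)
        fix i assume "i \<le> k"
        have "\<forall>b\<in>v ` G i. principal_axis J b" unfolding principal_axis_def G_def using v by auto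
        thus "spanned_by_principal_axes J (P i)" unfolding spanned_by_principal_axes_def P_def
          by (intro exI[of _ "v ` G i"] conjI) simp_all
      qed
    next
      show "\<forall>i\<in>{1..k}. P i \<noteq> {0} \<and> even (dim (P i))"
      proof (intro ballI conjI)
        fix i assume i: "i \<in> {1..k}"
        from gV[OF i] obtain l where l: "l \<in> E" "g i = mu l" unfolding V_def by auto
        have "v l \<in> P i" unfolding P_def G_def using l i val_def by (auto intro: span_base)
        thus "P i \<noteq> {0}" using v[OF l(1)] by auto
        have "subspace (P i)" unfolding P_def by simp
        thus "even (dim (P i))" using even_dim_cs cs[OF i] by blast
      qed
    next
      show "\<forall>i\<in>{1..k}. \<omega> i > 0 \<and> compatible_complex_structure (P i) (I i)"
      proof (intro ballI conjI)
        fix i assume i: "i \<in> {1..k}"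
        show "\<omega> i > 0" using val_neg[OF i] \<omega>_def by simp
        show "compatible_complex_structure (P i) (I i)" using cs[OF i] .
      qed
    next
      show "\<forall>i\<in>{1..k}. \<forall>x\<in>P i. \<Omega> *v x = \<omega> i *\<^sub>R I i x"
      proof (intro ballI)
        fix i x assume i: "i \<in> {1..k}" and x: "x \<in> P i"
        have "\<omega> i > 0" using val_neg[OF i] \<omega>_def by simp
        thus "\<Omega> *v x = \<omega> i *\<^sub>R I i x" by (simp add: Ix)
      qed
    next
      show "\<forall>x\<in>P 0. \<Omega> *v x = 0"
      proof
        fix x assume "x \<in> P 0"
        hence "S *v x = 0" using SP[of x 0] val_def by simp
        hence "inner (\<Omega> *v x) (\<Omega> *v x) = 0" using Sneg[of x] by simp
        thus "\<Omega> *v x = 0" by simp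
      qed
    qed
  next
    assume "\<exists>k P \<omega> I. orth_decomposition k P \<and>
        (\<forall>i\<le>k. spanned_by_principal_axes J (P i)) \<and>
        (\<forall>i\<in>{1..k}. P i \<noteq> {0} \<and> even (dim (P i))) \<and>
        (\<forall>i\<in>{1..k}. \<omega> i > 0 \<and> compatible_complex_structure (P i) (I i)) \<and>
        (\<forall>i\<in>{1..k}. \<forall>x\<in>P i. \<Omega> *v x = \<omega> i *\<^sub>R I i x) \<and>
        (\<forall>x\<in>P 0. \<Omega> *v x = 0)"
    then obtain k P \<omega> I where od: "orth_decomposition k P"
      and pa: "\<forall>i\<le>k. spanned_by_principal_axes J (P i)"
      and cs: "\<forall>i\<in>{1..k}. \<omega> i > 0 \<and> compatible_complex_structure (P i) (I i)"
      and OI: "\<forall>i\<in>{1..k}. \<forall>x\<in>P i. \<Omega> *v x = \<omega> i *\<^sub>R I i x"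
      and O0: "\<forall>x\<in>P 0. \<Omega> *v x = 0" by blast
    have Jpres: "J *v x \<in> P i" if ix: "i \<le> k" "x \<in> P i" for i x
    proof -
      have "spanned_by_principal_axes J (P i)" using pa ix(1) by blast
      then obtain T where T: "\<forall>v\<in>T. principal_axis J v" "P i = span T"
        unfolding spanned_by_principal_axes_def by blast
      have "\<forall>b\<in>T. \<exists>l. J *v b = l *\<^sub>R b" using T(1) unfolding principal_axis_def by blast
      thus ?thesis using preserve_span[of T J x] T(2) ix(2) by simp
    qed
    have Sc: "\<exists>c. \<forall>y\<in>P i. S *v y = c *\<^sub>R y" if "i \<le> k" for i
    proof (cases "i = 0")
      case True
      hence "\<forall>y\<in>P i. S *v y = 0 *\<^sub>R y" using O0
        by (simp add: S_def matrix_vector_mul_assoc[symmetric])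
      thus ?thesis by blast
    next
      case False
      hence i: "i \<in> {1..k}" using that by auto
      have "\<forall>y\<in>P i. S *v y = (- (\<omega> i * \<omega> i)) *\<^sub>R y"
      proof
        fix y assume y: "y \<in> P i"
        have ccs: "compatible_complex_structure (P i) (I i)" using cs i by auto
        have Iy: "I i y \<in> P i" and II: "I i (I i y) = - y"
          using ccs y unfolding compatible_complex_structure_def by auto
        have "S *v y = \<Omega> *v (\<Omega> *v y)" by (simp add: S_def matrix_vector_mul_assoc)
        also have "\<dots> = \<Omega> *v (\<omega> i *\<^sub>R I i y)" using OI i y by simp
        also have "\<dots> = \<omega> i *\<^sub>R (\<Omega> *v I i y)" by (simp add: matrix_vector_mult_scaleR)
        also have "\<dots> = \<omega> i *\<^sub>R (\<omega> i *\<^sub>R I i (I i y))" using OI i Iy by simp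
        also have "\<dots> = (- (\<omega> i * \<omega> i)) *\<^sub>R y" using II by simp
        finally show "S *v y = (- (\<omega> i * \<omega> i)) *\<^sub>R y" .
      qed
      thus ?thesis by blast
    qed
    have sub: "subspace {x. (J ** S - S ** J) *v x = 0}"
      using kernel_subspace[of "J ** S - S ** J" 0] by simp
    have "(\<Union>i\<le>k. P i) \<subseteq> {x. (J ** S - S ** J) *v x = 0}"
    proof
      fix x assume "x \<in> (\<Union>i\<le>k. P i)"
      then obtain i where i: "i \<le> k" "x \<in> P i" by auto
      obtain c where c: "\<forall>y\<in>P i. S *v y = c *\<^sub>R y" using Sc[OF i(1)] by blast
      have "(J ** S) *v x = c *\<^sub>R (J *v x)" using c i
        by (simp add: matrix_vector_mul_assoc[symmetric] matrix_vector_mult_scaleR)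
      moreover have "(S ** J) *v x = c *\<^sub>R (J *v x)" using c Jpres[OF i]
        by (simp add: matrix_vector_mul_assoc[symmetric])
      ultimately show "x \<in> {x. (J ** S - S ** J) *v x = 0}" by (simp add: matrix_vector_mult_diff_rdistrib)
    qed
    hence "span (\<Union>i\<le>k. P i) \<subseteq> {x. (J ** S - S ** J) *v x = 0}" using sub by (rule span_minimal)
    hence "\<forall>x. (J ** S - S ** J) *v x = 0" using od unfolding orth_decomposition_def by auto
    hence "J ** S = S ** J" unfolding matrix_eq by (simp add: matrix_vector_mult_diff_rdistrib)
    thus "commutator M \<Omega> = 0" using comm by simp
  qed
qed

end
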